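(* Let $N\ge 1$ and let $A\subset\Gamma=\mathbb N_0^s$ satisfy \[ A\supseteq \bigcup_{j=1}^N\ \bigcup_{B\in L_j(\Gamma)} B , \] i.e. $A$ contains every lower set of cardinality at most $N$. Then $A$ is a monomial degree reducing universal interpolation set of order $N$.
   Context: $\Pi=\mathbb C[x_1,\dots,x_s]$, $\deg$ is total degree with $\deg 0<0$. For $A\subset\Gamma=\mathbb N_0^s$, $\Pi_A$ is the span of the monomials $x^\alpha$, $\alpha\in A$. A subspace $\mathcal P\subseteq\Pi$ is a degree reducing universal interpolation space of order $N$ if for every finite $X\subset\mathbb C^s$ with $\#X\le N$ and every $q\in\Pi$ there is $p\in\mathcal P$ with $p|_X=q|_X$ and $\deg p\le\deg q$. A set $A\subset\Gamma$ is a monomial degree reducing universal interpolation set of order $N$ if $\Pi_A$ is a degree reducing universal interpolation space of order $N$. For $\alpha,\beta\in\Gamma$, $\alpha\le\beta$ means $\alpha_j\le\beta_j$ for all $j$; $B\subset\Gamma$ is a lower set if $\alpha\in B$ and $\beta\le\alpha$ imply $\beta\in B$; $L_j(\Gamma)$ denotes the set of lower sets of cardinality $j$. *)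

theory Defs
  imports Complex_Main "HOL-Library.Poly_Mapping"
begin

text \<open>Variables are indexed by a finite type 'n (so s = CARD('n)); exponents
  (elements of Gamma = N_0^s) are functions 'n => nat; points of C^s are
  functions 'n => complex; a polynomial is a finitely supported coefficient map
  from exponents to complex numbers.\<close>

type_synonym 'n mpoly_c = "('n \<Rightarrow> nat) \<Rightarrow>\<^sub>0 complex"

definition monom_eval :: "('n::finite \<Rightarrow> nat) \<Rightarrow> ('n \<Rightarrow> complex) \<Rightarrow> complex" where
  "monom_eval \<alpha> x = (\<Prod>i\<in>UNIV. x i ^ \<alpha> i)"

definition peval :: "'n::finite mpoly_c \<Rightarrow> ('n \<Rightarrow> complex) \<Rightarrow> complex" where
  "peval p x = (\<Sum>\<alpha>\<in>Poly_Mapping.keys p. Poly_Mapping.lookup p \<alpha> * monom_eval \<alpha> x)"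

text \<open>Total degree, with deg 0 = -1 < 0.\<close>
definition tdeg :: "'n::finite mpoly_c \<Rightarrow> int" where
  "tdeg p = (if p = 0 then -1 else int (Max ((\<lambda>\<alpha>. \<Sum>i\<in>UNIV. \<alpha> i) ` Poly_Mapping.keys p)))"

definition mono_span :: "('n::finite \<Rightarrow> nat) set \<Rightarrow> 'n mpoly_c set" where
  "mono_span A = {p. Poly_Mapping.keys p \<subseteq> A}"

definition dr_univ_interp_space :: "'n::finite mpoly_c set \<Rightarrow> nat \<Rightarrow> bool" where
  "dr_univ_interp_space P N \<longleftrightarrow>
     (\<forall>X :: ('n \<Rightarrow> complex) set. \<forall>q. finite X \<and> card X \<le> N \<longrightarrow>
        (\<exists>p\<in>P. (\<forall>x\<in>X. peval p x = peval q x) \<and> tdeg p \<le> tdeg q))"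

definition mono_dr_univ_interp_set :: "('n::finite \<Rightarrow> nat) set \<Rightarrow> nat \<Rightarrow> bool" where
  "mono_dr_univ_interp_set A N \<longleftrightarrow> dr_univ_interp_space (mono_span A) N"

definition lower_set :: "('n \<Rightarrow> nat) set \<Rightarrow> bool" where
  "lower_set B \<longleftrightarrow> (\<forall>\<alpha>\<in>B. \<forall>\<beta>. \<beta> \<le> \<alpha> \<longrightarrow> \<beta> \<in> B)"

definition lower_sets_card :: "nat \<Rightarrow> ('n \<Rightarrow> nat) set set" where
  "lower_sets_card j = {B. lower_set B \<and> finite B \<and> card B = j}"

end

theory Submission
  imports Defs "HOL-Library.Function_Algebras" "HOL-Library.FuncSet"
begin

definition dg :: "('n::finite \<Rightarrow> nat) \<Rightarrow> nat" where
  "dg \<alpha> = (\<Sum>i\<in>UNIV. \<alpha> i)"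

definition glt :: "('n \<Rightarrow> nat) \<Rightarrow> ('n::finite \<Rightarrow> nat) \<Rightarrow> ('n \<Rightarrow> nat) \<Rightarrow> bool" where
  "glt f b a \<longleftrightarrow> dg b < dg a \<or> (dg b = dg a \<and> (\<exists>i. b i < a i \<and> (\<forall>j. f j < f i \<longrightarrow> b j = a j)))"

lemma glt_irrefl: "\<not> glt f a a"
  by (auto simp: glt_def)

lemma glt_trans:
  assumes "inj f" "glt f a b" "glt f b c" shows "glt f a c"
proof -
  { assume d: "dg a = dg b" "dg b = dg c"
    from assms(2) d obtain i where i: "a i < b i" "\<forall>j. f j < f i \<longrightarrow> a j = b j" by (auto simp: glt_def)
    from assms(3) d obtain k where k: "b k < c k" "\<forall>j. f j < f k \<longrightarrow> b j = c j" by (auto simp: glt_def)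
    have "\<exists>i. a i < c i \<and> (\<forall>j. f j < f i \<longrightarrow> a j = c j)"
    proof (cases "f i < f k")
      case True then show ?thesis using i k by (intro exI[of _ i]) auto
    next
      case False
      show ?thesis
      proof (cases "f k < f i")
        case True then show ?thesis using i k by (intro exI[of _ k]) auto
      next
        case False
        with \<open>\<not> f i < f k\<close> have "f i = f k" by simp
        then have "i = k" using assms(1) by (simp add: inj_eq)
        then show ?thesis using i k by (intro exI[of _ k]) auto
      qed
    qed }
  then show ?thesis using assms(2,3) unfolding glt_def by force
qed

lemma glt_total:
  assumes "a \<noteq> b" shows "glt f a b \<or> glt f b a"
proof (cases "dg a = dg b")
  case True
  define D where "D = {i. a i \<noteq> b i}"
  have "D \<noteq> {}" using assms by (auto simp: D_def)
  have fin: "finite (f ` D)" by simp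
  have "Min (f ` D) \<in> f ` D" using Min_in[OF fin] \<open>D \<noteq> {}\<close> by simp
  then obtain i where iD: "i \<in> D" and fi: "f i = Min (f ` D)" by auto
  have m: "\<forall>j. f j < f i \<longrightarrow> a j = b j"
  proof (intro allI impI)
    fix j assume "f j < f i"
    show "a j = b j"
    proof (rule ccontr)
      assume "a j \<noteq> b j" then have "j \<in> D" by (simp add: D_def)
      then have "f i \<le> f j" using fi Min_le[OF fin] by simp
      with \<open>f j < f i\<close> show False by simp
    qed
  qed
  from iD have "a i < b i \<or> b i < a i" by (auto simp: D_def)
  then show ?thesis using m True unfolding glt_def by (metis)
next
  case False then show ?thesis by (auto simp: glt_def)
qed

lemma dg_add: "dg (\<lambda>i. a i + d i) = dg a + dg d"
  by (simp add: dg_def sum.distrib)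

lemma glt_mono:
  assumes "glt f b a" shows "glt f (\<lambda>i. b i + d i) (\<lambda>i. a i + d i)"
  using assms unfolding glt_def dg_add by auto

lemma glt_dg: "glt f b a \<Longrightarrow> dg b \<le> dg a"
  by (auto simp: glt_def)

lemma finite_dg: "finite {a :: 'n::finite \<Rightarrow> nat. dg a \<le> d}"
proof -
  have "{a :: 'n \<Rightarrow> nat. dg a \<le> d} \<subseteq> Pi\<^sub>E UNIV (\<lambda>_. {..d})"
  proof
    fix a :: "'n \<Rightarrow> nat" assume "a \<in> {a. dg a \<le> d}"
    then have "a i \<le> d" for i
      using member_le_sum[of i UNIV a] by (simp add: dg_def)
    then show "a \<in> Pi\<^sub>E UNIV (\<lambda>_. {..d})" by (simp add: PiE_UNIV_domain)
  qed
  moreover have "finite (Pi\<^sub>E (UNIV::'n set) (\<lambda>_. {..d}))" by (intro finite_PiE) auto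
  ultimately show ?thesis by (rule finite_subset)
qed

lemma glt_wf:
  assumes "inj f" shows "wf {(b, a). glt f b a}"
proof (rule wf_subset[OF wf_measure[of "\<lambda>a. card {c. glt f c a}"]])
  show "{(b, a). glt f b a} \<subseteq> measure (\<lambda>a. card {c. glt f c a})"
  proof clarify
    fix b a assume ba: "glt f b a"
    have "finite {c. glt f c a}"
      by (rule finite_subset[OF _ finite_dg[of "dg a"]]) (auto dest: glt_dg)
    moreover have "{c. glt f c b} \<subset> {c. glt f c a}"
      using ba glt_trans[OF assms] glt_irrefl by blast
    ultimately show "(b, a) \<in> measure (\<lambda>a. card {c. glt f c a})"
      by (simp add: psubset_card_mono)
  qed
qed


definition rep :: "'x set \<Rightarrow> 'a set \<Rightarrow> ('a \<Rightarrow> 'x \<Rightarrow> complex) \<Rightarrow> ('x \<Rightarrow> complex) \<Rightarrow> bool" where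
  "rep X T m v \<longleftrightarrow> (\<exists>L d. finite L \<and> L \<subseteq> T \<and> (\<forall>x\<in>X. v x = (\<Sum>g\<in>L. d g * m g x)))"

lemma rep_mono: "rep X T m v \<Longrightarrow> T \<subseteq> T' \<Longrightarrow> rep X T' m v"
  unfolding rep_def by blast

lemma rep_zero: "rep X T m (\<lambda>x. 0)"
  unfolding rep_def by (intro exI[of _ "{}"]) auto

lemma rep_base: "g \<in> T \<Longrightarrow> rep X T m (m g)"
  unfolding rep_def by (intro exI[of _ "{g}"] exI[of _ "\<lambda>_. 1"]) auto

lemma rep_add:
  assumes "rep X T m u" "rep X T m v"
  shows "rep X T m (\<lambda>x. u x + a * v x)"
proof -
  from assms(1) obtain L1 d1 where 1: "finite L1" "L1 \<subseteq> T" "\<forall>x\<in>X. u x = (\<Sum>g\<in>L1. d1 g * m g x)"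
    unfolding rep_def by blast
  from assms(2) obtain L2 d2 where 2: "finite L2" "L2 \<subseteq> T" "\<forall>x\<in>X. v x = (\<Sum>g\<in>L2. d2 g * m g x)"
    unfolding rep_def by blast
  define d where "d g = (if g \<in> L1 then d1 g else 0) + a * (if g \<in> L2 then d2 g else 0)" for g
  have "\<forall>x\<in>X. u x + a * v x = (\<Sum>g\<in>L1 \<union> L2. d g * m g x)"
  proof
    fix x assume "x \<in> X"
    have s1: "(\<Sum>g\<in>L1 \<union> L2. (if g \<in> L1 then d1 g else 0) * m g x) = (\<Sum>g\<in>L1. d1 g * m g x)"
      by (rule sum.mono_neutral_cong_right) (use 1 2 in auto)
    have s2: "(\<Sum>g\<in>L1 \<union> L2. (if g \<in> L2 then d2 g else 0) * m g x) = (\<Sum>g\<in>L2. d2 g * m g x)"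
      by (rule sum.mono_neutral_cong_right) (use 1 2 in auto)
    have "(\<Sum>g\<in>L1 \<union> L2. d g * m g x) = (\<Sum>g\<in>L1 \<union> L2. (if g \<in> L1 then d1 g else 0) * m g x)
        + a * (\<Sum>g\<in>L1 \<union> L2. (if g \<in> L2 then d2 g else 0) * m g x)"
      by (simp add: d_def algebra_simps sum.distrib sum_distrib_left)
    then show "u x + a * v x = (\<Sum>g\<in>L1 \<union> L2. d g * m g x)"
      using s1 s2 1(3) 2(3) \<open>x \<in> X\<close> by simp
  qed
  then show ?thesis unfolding rep_def using 1 2 by (intro exI[of _ "L1 \<union> L2"] exI[of _ d]) auto
qed

lemma rep_comb:
  assumes "finite K" "\<forall>b\<in>K. rep X T m (v b)"
  shows "rep X T m (\<lambda>x. \<Sum>b\<in>K. c b * v b x)"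
  using assms
proof (induction K rule: finite_induct)
  case empty then show ?case by (simp add: rep_zero)
next
  case (insert b K)
  have "rep X T m (\<lambda>x. (\<Sum>b\<in>K. c b * v b x) + c b * v b x)"
    using insert by (intro rep_add) auto
  then show ?case using insert by (simp add: add.commute)
qed

lemma rep_cong: "rep X T m u \<Longrightarrow> \<forall>x\<in>X. v x = u x \<Longrightarrow> rep X T m v"
  unfolding rep_def by auto


definition SS :: "('n::finite \<Rightarrow> complex) set \<Rightarrow> ('n \<Rightarrow> nat) \<Rightarrow> ('n \<Rightarrow> nat) set" where
  "SS X f = {a. \<not> rep X {b. glt f b a} monom_eval (monom_eval a)}"

lemma monom_eval_add: "monom_eval (\<lambda>i. b i + d i) x = monom_eval b x * monom_eval d x"
  by (simp add: monom_eval_def power_add prod.distrib)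

lemma SS_lower: "lower_set (SS X f)"
  unfolding lower_set_def
proof (intro ballI allI impI)
  fix a b assume aS: "a \<in> SS X f" and ba: "b \<le> a"
  show "b \<in> SS X f"
  proof (rule ccontr)
    assume "b \<notin> SS X f"
    then obtain L d where L: "finite L" "L \<subseteq> {c. glt f c b}"
      "\<forall>x\<in>X. monom_eval b x = (\<Sum>g\<in>L. d g * monom_eval g x)"
      unfolding SS_def rep_def by blast
    define e where "e i = a i - b i" for i
    have a_eq: "a = (\<lambda>i. b i + e i)" using ba by (auto simp: e_def le_fun_def)
    have "rep X {c. glt f c a} monom_eval (\<lambda>x. \<Sum>g\<in>L. d g * monom_eval (\<lambda>i. g i + e i) x)"
    proof (rule rep_comb[OF L(1)], intro ballI rep_base)
      fix g assume "g \<in> L"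
      then have "glt f g b" using L(2) by auto
      then show "(\<lambda>i. g i + e i) \<in> {c. glt f c a}" using glt_mono a_eq by auto
    qed
    moreover have "\<forall>x\<in>X. monom_eval a x = (\<Sum>g\<in>L. d g * monom_eval (\<lambda>i. g i + e i) x)"
    proof
      fix x assume "x \<in> X"
      have "monom_eval a x = monom_eval b x * monom_eval e x" using a_eq monom_eval_add by metis
      also have "\<dots> = (\<Sum>g\<in>L. d g * monom_eval (\<lambda>i. g i + e i) x)"
        using L(3) \<open>x \<in> X\<close> by (simp add: monom_eval_add sum_distrib_right mult.assoc)
      finally show "monom_eval a x = (\<Sum>g\<in>L. d g * monom_eval (\<lambda>i. g i + e i) x)" .
    qed
    ultimately have "rep X {c. glt f c a} monom_eval (monom_eval a)" by (rule rep_cong)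
    with aS show False unfolding SS_def by simp
  qed
qed

lemma SS_span:
  assumes "inj f"
  shows "rep X (SS X f \<inter> {b. b = a \<or> glt f b a}) monom_eval (monom_eval a)"
proof (induction a rule: wf_induct[OF glt_wf[OF assms]])
  case (1 a)
  show ?case
  proof (cases "a \<in> SS X f")
    case True then show ?thesis by (intro rep_base) auto
  next
    case False
    then obtain L d where L: "finite L" "L \<subseteq> {c. glt f c a}"
      "\<forall>x\<in>X. monom_eval a x = (\<Sum>g\<in>L. d g * monom_eval g x)"
      unfolding SS_def rep_def by blast
    have "rep X (SS X f \<inter> {b. b = a \<or> glt f b a}) monom_eval (\<lambda>x. \<Sum>g\<in>L. d g * monom_eval g x)"
    proof (rule rep_comb[OF L(1)], intro ballI)
      fix g assume "g \<in> L"
      then have g: "glt f g a" using L(2) by auto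
      then have "rep X (SS X f \<inter> {b. b = g \<or> glt f b g}) monom_eval (monom_eval g)" using 1 by auto
      then show "rep X (SS X f \<inter> {b. b = a \<or> glt f b a}) monom_eval (monom_eval g)"
        by (rule rep_mono) (use g glt_trans[OF assms] in blast)
    qed
    then show ?thesis by (rule rep_cong) (use L(3) in simp)
  qed
qed


definition fscale :: "complex \<Rightarrow> ('x \<Rightarrow> complex) \<Rightarrow> ('x \<Rightarrow> complex)" where
  "fscale c v = (\<lambda>x. c * v x)"

lemma vs_fscale: "vector_space fscale"
  by unfold_locales (auto simp: fscale_def fun_eq_iff algebra_simps)

lemma sum_fun_apply: "(\<Sum>i\<in>A. (g i :: 'x \<Rightarrow> 'b::comm_monoid_add)) x = (\<Sum>i\<in>A. g i x)"
  by (induction A rule: infinite_finite_induct) auto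

lemma finite_max:
  assumes "finite G" "G \<noteq> {}" "inj f"
  shows "\<exists>a\<in>G. \<forall>b\<in>G. b \<noteq> a \<longrightarrow> glt f b a"
  using assms(1,2)
proof (induction G rule: finite_ne_induct)
  case (singleton x) then show ?case by auto
next
  case (insert x G)
  then obtain a where a: "a \<in> G" "\<forall>b\<in>G. b \<noteq> a \<longrightarrow> glt f b a" by auto
  show ?case
  proof (cases "glt f a x")
    case True
    then show ?thesis using a glt_trans[OF assms(3)] insert.hyps(2) by (intro bexI[of _ x]) auto
  next
    case False
    have "x \<noteq> a" using insert a(1) by auto
    then have "glt f x a" using glt_total[of x a f] False by auto
    then show ?thesis using a by auto
  qed
qed

lemma SS_card:
  assumes "inj f" "finite X" "finite F" "F \<subseteq> SS X f"
  shows "card F \<le> card X"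
proof -
  interpret V: vector_space fscale by (rule vs_fscale)
  define r where "r a = (\<lambda>x. if x \<in> X then monom_eval a x else 0)" for a
  define del where "del y = (\<lambda>x. if x = y then 1 else (0::complex))" for y :: "'a \<Rightarrow> complex"
  have inj: "inj_on r F"
  proof (rule inj_onI, rule ccontr)
    fix a b assume ab: "a \<in> F" "b \<in> F" "r a = r b" "a \<noteq> b"
    have gen: False if "a' \<in> F" "b' \<in> F" "r a' = r b'" "glt f b' a'" for a' b'
    proof -
      have "\<forall>x\<in>X. monom_eval a' x = monom_eval b' x"
        using that(3) unfolding r_def fun_eq_iff by metis
      then have "rep X {c. glt f c a'} monom_eval (monom_eval a')"
        by (intro rep_cong[OF rep_base]) (use that(4) in auto)
      then show False using that(1) assms(4) unfolding SS_def by auto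
    qed
    from glt_total[OF ab(4), of f] show False using gen ab by metis
  qed
  have span: "r ` F \<subseteq> V.span (del ` X)"
  proof clarify
    fix a assume "a \<in> F"
    have "r a = (\<Sum>y\<in>X. fscale (monom_eval a y) (del y))"
    proof (rule ext)
      fix x
      have "(\<Sum>y\<in>X. fscale (monom_eval a y) (del y)) x = (\<Sum>y\<in>X. if x = y then monom_eval a y else 0)"
        unfolding sum_fun_apply fscale_def del_def by (rule sum.cong) auto
      also have "\<dots> = r a x" using assms(2) by (simp add: r_def)
      finally show "r a x = (\<Sum>y\<in>X. fscale (monom_eval a y) (del y)) x" by simp
    qed
    also have "\<dots> \<in> V.span (del ` X)"
      by (intro V.span_sum V.span_scale V.span_base) auto
    finally show "r a \<in> V.span (del ` X)" .
  qed
  have indep: "V.independent (r ` F)"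
  proof -
    { fix t u v assume t: "finite t" "t \<subseteq> r ` F" "(\<Sum>v\<in>t. fscale (u v) v) = 0" "v \<in> t" "u v \<noteq> 0"
      define G where "G = {a \<in> F. r a \<in> t \<and> u (r a) \<noteq> 0}"
      have finG: "finite G" using assms(3) by (simp add: G_def)
      have "G \<noteq> {}" using t(2,4,5) by (auto simp: G_def)
      then obtain a where aG: "a \<in> G" and amax: "\<forall>b\<in>G. b \<noteq> a \<longrightarrow> glt f b a"
        using finite_max[OF finG _ assms(1)] by blast
      have tG: "t = r ` {a \<in> F. r a \<in> t}" using t(2) by auto
      have injt: "inj_on r {a \<in> F. r a \<in> t}" using inj by (rule inj_on_subset) auto
      have "\<forall>x\<in>X. (\<Sum>b\<in>G. u (r b) * monom_eval b x) = 0"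
      proof
        fix x assume "x \<in> X"
        have "0 = (\<Sum>v\<in>t. fscale (u v) v) x" using t(3) by simp
        also have "\<dots> = (\<Sum>v\<in>t. u v * v x)" by (simp add: sum_fun_apply fscale_def)
        also have "\<dots> = (\<Sum>b\<in>{a \<in> F. r a \<in> t}. u (r b) * r b x)"
          by (subst tG, subst sum.reindex[OF injt]) simp
        also have "\<dots> = (\<Sum>b\<in>G. u (r b) * r b x)"
          by (rule sum.mono_neutral_cong_right) (use assms(3) in \<open>auto simp: G_def\<close>)
        also have "\<dots> = (\<Sum>b\<in>G. u (r b) * monom_eval b x)" using \<open>x \<in> X\<close> by (simp add: r_def)
        finally show "(\<Sum>b\<in>G. u (r b) * monom_eval b x) = 0" by simp
      qed
      have ua: "u (r a) \<noteq> 0" using aG by (simp add: G_def)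
      have "\<forall>x\<in>X. monom_eval a x = (\<Sum>b\<in>G - {a}. (- u (r b) / u (r a)) * monom_eval b x)"
      proof
        fix x assume x: "x \<in> X"
        have "(\<Sum>b\<in>G. u (r b) * monom_eval b x) = u (r a) * monom_eval a x + (\<Sum>b\<in>G - {a}. u (r b) * monom_eval b x)"
          using aG finG by (simp add: sum.remove)
        then have "u (r a) * monom_eval a x = - (\<Sum>b\<in>G - {a}. u (r b) * monom_eval b x)"
          using \<open>\<forall>x\<in>X. _ = 0\<close> x by (simp add: eq_neg_iff_add_eq_0 add.commute)
        then have "monom_eval a x = - (\<Sum>b\<in>G - {a}. u (r b) * monom_eval b x) / u (r a)"
          using ua by (simp add: field_simps)
        also have "\<dots> = (\<Sum>b\<in>G - {a}. (- u (r b) / u (r a)) * monom_eval b x)"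
          by (simp add: sum_divide_distrib sum_negf)
        finally show "monom_eval a x = (\<Sum>b\<in>G - {a}. (- u (r b) / u (r a)) * monom_eval b x)" .
      qed
      then have "rep X {c. glt f c a} monom_eval (monom_eval a)"
        unfolding rep_def using finG amax by (intro exI[of _ "G - {a}"] exI[of _ "\<lambda>b. - u (r b) / u (r a)"]) auto
      moreover have "a \<in> SS X f" using aG assms(4) by (auto simp: G_def)
      ultimately have False unfolding SS_def by simp }
    then show ?thesis unfolding V.independent_explicit_module by blast
  qed
  have "card (r ` F) \<le> card (del ` X)"
    using V.independent_span_bound[OF _ indep span] assms(2) by simp
  also have "\<dots> \<le> card X" by (rule card_image_le[OF assms(2)])
  finally show ?thesis using card_image[OF inj] by simp
qed


lemma tdeg_ge: "tdeg p \<ge> -1"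
  by (simp add: tdeg_def)

theorem proposition19:
  fixes A :: "('n::finite \<Rightarrow> nat) set" and N :: nat
  assumes "N \<ge> 1"
    and "(\<Union>j\<in>{1..N}. \<Union>(lower_sets_card j :: ('n \<Rightarrow> nat) set set)) \<subseteq> A"
  shows "mono_dr_univ_interp_set A N"
  unfolding mono_dr_univ_interp_set_def dr_univ_interp_space_def mono_span_def
proof (intro allI impI)
  fix X :: "('n \<Rightarrow> complex) set" and q :: "'n mpoly_c"
  assume XN: "finite X \<and> card X \<le> N"
  obtain f :: "'n \<Rightarrow> nat" where f: "inj f"
    using finite_imp_inj_to_nat_seg[of "UNIV :: 'n set"] by auto
  define S where "S = SS X f"
  have finS: "finite S"
  proof (rule ccontr)
    assume "infinite S"
    then obtain F where "F \<subseteq> S" "finite F" "card F = card X + 1"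
      using infinite_arbitrarily_large by blast
    then show False using SS_card[OF f, of X F] XN S_def by simp
  qed
  have cardS: "card S \<le> card X" using SS_card[OF f, of X S] XN finS S_def by simp
  have SA: "S \<subseteq> A"
  proof (cases "S = {}")
    case False
    then have "card S \<ge> 1" using finS by (simp add: Suc_le_eq card_gt_0_iff)
    moreover have "S \<in> lower_sets_card (card S)"
      using SS_lower finS by (simp add: lower_sets_card_def S_def)
    ultimately show ?thesis using assms(2) cardS XN by fastforce
  qed simp
  define T where "T = S \<inter> {b. \<exists>a\<in>Poly_Mapping.keys q. b = a \<or> glt f b a}"
  have sp: "\<forall>a\<in>Poly_Mapping.keys q. rep X T monom_eval (monom_eval a)"
  proof
    fix a assume "a \<in> Poly_Mapping.keys q"
    show "rep X T monom_eval (monom_eval a)"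
      by (rule rep_mono[OF SS_span[OF f, of X a]]) (use \<open>a \<in> Poly_Mapping.keys q\<close> in \<open>auto simp: T_def S_def\<close>)
  qed
  have "rep X T monom_eval (\<lambda>x. \<Sum>a\<in>Poly_Mapping.keys q. Poly_Mapping.lookup q a * monom_eval a x)"
    using rep_comb[OF finite_keys sp] .
  then obtain L d where L: "finite L" "L \<subseteq> T"
    "\<forall>x\<in>X. peval q x = (\<Sum>g\<in>L. d g * monom_eval g x)"
    unfolding rep_def peval_def by blast
  define p where "p = Abs_poly_mapping (\<lambda>g. if g \<in> L then d g else 0)"
  have lp: "Poly_Mapping.lookup p = (\<lambda>g. if g \<in> L then d g else 0)"
    unfolding p_def by (rule lookup_Abs_poly_mapping) (rule finite_subset[OF _ L(1)], auto)
  have kp: "Poly_Mapping.keys p \<subseteq> L" by (auto simp: in_keys_iff lp split: if_splits)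
  have ev: "peval p x = peval q x" if "x \<in> X" for x
  proof -
    have "peval p x = (\<Sum>g\<in>L. d g * monom_eval g x)"
      unfolding peval_def
      by (rule sum.mono_neutral_cong_left[OF L(1) kp]) (auto simp: lp in_keys_iff)
    then show ?thesis using L(3) that by simp
  qed
  have kT: "Poly_Mapping.keys p \<subseteq> T" using kp L(2) by auto
  have deg: "tdeg p \<le> tdeg q"
  proof (cases "p = 0")
    case True then show ?thesis using tdeg_ge[of q] by (simp add: tdeg_def)
  next
    case False
    then have ne: "Poly_Mapping.keys p \<noteq> {}" by simp
    then obtain g where "g \<in> Poly_Mapping.keys p" by blast
    then have "Poly_Mapping.keys q \<noteq> {}" using kT by (auto simp: T_def)
    then have q0: "q \<noteq> 0" by auto
    have "Max ((\<lambda>\<alpha>. \<Sum>i\<in>UNIV. \<alpha> i) ` Poly_Mapping.keys p) \<le> Max ((\<lambda>\<alpha>. \<Sum>i\<in>UNIV. \<alpha> i) ` Poly_Mapping.keys q)"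
    proof (rule Max.boundedI)
      show "finite ((\<lambda>\<alpha>. \<Sum>i\<in>UNIV. \<alpha> i) ` Poly_Mapping.keys p)" by simp
      show "(\<lambda>\<alpha>. \<Sum>i\<in>UNIV. \<alpha> i) ` Poly_Mapping.keys p \<noteq> {}" using ne by simp
    next
      fix y assume "y \<in> (\<lambda>\<alpha>. \<Sum>i\<in>UNIV. \<alpha> i) ` Poly_Mapping.keys p"
      then obtain g where g: "g \<in> Poly_Mapping.keys p" "y = dg g" by (auto simp: dg_def)
      then obtain a where a: "a \<in> Poly_Mapping.keys q" "g = a \<or> glt f g a" using kT by (auto simp: T_def)
      then have "dg g \<le> dg a" using glt_dg by auto
      also have "dg a \<le> Max ((\<lambda>\<alpha>. \<Sum>i\<in>UNIV. \<alpha> i) ` Poly_Mapping.keys q)"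
        using a(1) by (simp add: dg_def)
      finally show "y \<le> Max ((\<lambda>\<alpha>. \<Sum>i\<in>UNIV. \<alpha> i) ` Poly_Mapping.keys q)" using g by simp
    qed
    then show ?thesis using False q0 by (simp add: tdeg_def)
  qed
  have "Poly_Mapping.keys p \<subseteq> A" using kT SA by (auto simp: T_def)
  then show "\<exists>p\<in>{p. Poly_Mapping.keys p \<subseteq> A}. (\<forall>x\<in>X. peval p x = peval q x) \<and> tdeg p \<le> tdeg q"
    using ev deg by blast
qed

end
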